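(* Let $\alpha\in(0,1)$, $\sigma=1-\frac{\alpha}{2}$, and let $c^{(\alpha,\sigma)}_{i,k}$ be the L2-1$_\sigma$ coefficients defined in the context. Then, for sufficiently small temporal stepsize $\tau$, $$(2\sigma-1)\,c^{(\alpha,\sigma)}_{k+1,k}>\sigma\, c^{(\alpha,\sigma)}_{k,k}\qquad\text{for all } k\ge 1 .$$
   Context: Let $\tilde a>0$, $T>\tilde a$, $N\in\mathbb{Z}^+$, $\tau=(T-\tilde a)/N$, $t_k=\tilde a+k\tau$ ($k=0,\dots,N$), and $t_{k+\sigma}=t_k+\sigma\tau$. For $1\le i\le k$ define $$a^{(\alpha,\sigma)}_{i,k}=\Big(\log\tfrac{t_{k+\sigma}}{t_{i-1}}\Big)^{1-\alpha}-\Big(\log\tfrac{t_{k+\sigma}}{t_{i}}\Big)^{1-\alpha},$$ $$b^{(\alpha,\sigma)}_{i,k}=\frac{1}{\log\frac{t_{i+1}}{t_{i-1}}}\Big\{\tfrac{2}{2-\alpha}\Big[\Big(\log\tfrac{t_{k+\sigma}}{t_{i-1}}\Big)^{2-\alpha}-\Big(\log\tfrac{t_{k+\sigma}}{t_{i}}\Big)^{2-\alpha}\Big]-\log\tfrac{t_i}{t_{i-1}}\Big[\Big(\log\tfrac{t_{k+\sigma}}{t_{i}}\Big)^{1-\alpha}+\Big(\log\tfrac{t_{k+\sigma}}{t_{i-1}}\Big)^{1-\alpha}\Big]\Big\}.$$ The coefficients are: $c^{(\alpha,\sigma)}_{1,0}=\frac{1}{\Gamma(2-\alpha)\log\frac{t_1}{t_0}}\big(\log\frac{t_\sigma}{t_0}\big)^{1-\alpha}$;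 for $k=1$: $c^{(\alpha,\sigma)}_{1,1}=\frac{a^{(\alpha,\sigma)}_{1,1}-b^{(\alpha,\sigma)}_{1,1}}{\Gamma(2-\alpha)\log\frac{t_1}{t_0}}$, $c^{(\alpha,\sigma)}_{2,1}=\frac{b^{(\alpha,\sigma)}_{1,1}+(\log\frac{t_{1+\sigma}}{t_1})^{1-\alpha}}{\Gamma(2-\alpha)\log\frac{t_2}{t_1}}$; for $k\ge2$: $c^{(\alpha,\sigma)}_{1,k}=\frac{a^{(\alpha,\sigma)}_{1,k}-b^{(\alpha,\sigma)}_{1,k}}{\Gamma(2-\alpha)\log\frac{t_1}{t_0}}$, $c^{(\alpha,\sigma)}_{i,k}=\frac{a^{(\alpha,\sigma)}_{i,k}+b^{(\alpha,\sigma)}_{i-1,k}-b^{(\alpha,\sigma)}_{i,k}}{\Gamma(2-\alpha)\log\frac{t_i}{t_{i-1}}}$ for $2\le i\le k$, and $c^{(\alpha,\sigma)}_{k+1,k}=\frac{b^{(\alpha,\sigma)}_{k,k}+(\log\frac{t_{k+\sigma}}{t_k})^{1-\alpha}}{\Gamma(2-\alpha)\log\frac{t_{k+1}}{t_k}}$. *)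

theory Defs
  imports "HOL-Analysis.Analysis"
begin

text \<open>Uniform grid: t_s = a + s*tau, for real index s (so that t_{k+sigma} makes sense).\<close>
definition tg :: "real \<Rightarrow> real \<Rightarrow> real \<Rightarrow> real" where
  "tg a tau s = a + s * tau"

definition acoef :: "real \<Rightarrow> real \<Rightarrow> real \<Rightarrow> real \<Rightarrow> nat \<Rightarrow> nat \<Rightarrow> real" where
  "acoef al sg a tau i k =
     (ln (tg a tau (real k + sg) / tg a tau (real i - 1))) powr (1 - al)
   - (ln (tg a tau (real k + sg) / tg a tau (real i))) powr (1 - al)"

definition bcoef :: "real \<Rightarrow> real \<Rightarrow> real \<Rightarrow> real \<Rightarrow> nat \<Rightarrow> nat \<Rightarrow> real" where
  "bcoef al sg a tau i k =
     (1 / ln (tg a tau (real i + 1) / tg a tau (real i - 1))) *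
     ( (2 / (2 - al)) *
         ((ln (tg a tau (real k + sg) / tg a tau (real i - 1))) powr (2 - al)
        - (ln (tg a tau (real k + sg) / tg a tau (real i))) powr (2 - al))
     - ln (tg a tau (real i) / tg a tau (real i - 1)) *
         ((ln (tg a tau (real k + sg) / tg a tau (real i))) powr (1 - al)
        + (ln (tg a tau (real k + sg) / tg a tau (real i - 1))) powr (1 - al)))"

definition ccoef :: "real \<Rightarrow> real \<Rightarrow> real \<Rightarrow> real \<Rightarrow> nat \<Rightarrow> nat \<Rightarrow> real" where
  "ccoef al sg a tau i k =
    (if k = 0 then
       (if i = 1 then (ln (tg a tau sg / tg a tau 0)) powr (1 - al)
                      / (Gamma (2 - al) * ln (tg a tau 1 / tg a tau 0))
        else 0)
     else if i = 1 then
       (acoef al sg a tau 1 k - bcoef al sg a tau 1 k)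
         / (Gamma (2 - al) * ln (tg a tau 1 / tg a tau 0))
     else if 2 \<le> i \<and> i \<le> k then
       (acoef al sg a tau i k + bcoef al sg a tau (i - 1) k - bcoef al sg a tau i k)
         / (Gamma (2 - al) * ln (tg a tau (real i) / tg a tau (real i - 1)))
     else if i = k + 1 then
       (bcoef al sg a tau k k + (ln (tg a tau (real k + sg) / tg a tau (real k))) powr (1 - al))
         / (Gamma (2 - al) * ln (tg a tau (real k + 1) / tg a tau (real k)))
     else 0)"

end

theory Submission
  imports Defs
begin

lemma tan_concave1:
  fixes b w :: real
  assumes b: "0 < b" "b < 1" and w: "0 < w" "w \<noteq> 1"
  shows "w powr b < 1 + b * (w - 1)"
proof -
  define f where "f = (\<lambda>x::real. 1 + b * (x - 1) - x powr b)"
  have d: "DERIV f x :> b - b * x powr (b - 1)" if "0 < x" for x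
    unfolding f_def using that by (auto intro!: derivative_eq_intros)
  have f1: "f 1 = 0" by (simp add: f_def)
  show ?thesis
  proof (cases "w > 1")
    case True
    have "f 1 < f w"
    proof (rule DERIV_pos_imp_increasing_open[OF True])
      fix x assume x: "1 < x" "x < w"
      have "x powr (b - 1) < 1" using x b by (intro powr_less_one) auto
      then have "b - b * x powr (b - 1) > 0" using b by (simp add: algebra_simps)
      then show "\<exists>y. DERIV f x :> y \<and> y > 0" using d[of x] x by auto
    next
      show "continuous_on {1..w} f" unfolding f_def by (intro continuous_intros) auto
    qed
    then show ?thesis using f1 by (simp add: f_def)
  next
    case False
    then have wl: "w < 1" using w by auto
    have "f w > f 1"
    proof (rule DERIV_neg_imp_decreasing_open[OF wl])
      fix x assume x: "w < x" "x < 1"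
      have "x powr (b - 1) > 1" using x b w
        by (metis diff_less_0_iff_less less_trans powr_less_mono2_neg powr_one_eq_one)
      then have "b - b * x powr (b - 1) < 0" using b by (simp add: algebra_simps)
      then show "\<exists>y. DERIV f x :> y \<and> y < 0" using d[of x] x w by auto
    next
      show "continuous_on {w..1} f" unfolding f_def using w by (intro continuous_intros) auto
    qed
    then show ?thesis using f1 by (simp add: f_def)
  qed
qed

lemma tan_convex1:
  fixes c w :: real
  assumes c: "c \<le> 0" and w: "0 < w"
  shows "w powr c \<ge> 1 + c * (w - 1)"
proof -
  define f where "f = (\<lambda>x::real. x powr c - 1 - c * (x - 1))"
  have d: "DERIV f x :> c * x powr (c - 1) - c" if "0 < x" for x
    unfolding f_def using that by (auto intro!: derivative_eq_intros)
  have f1: "f 1 = 0" by (simp add: f_def)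
  show ?thesis
  proof (cases "w \<ge> 1")
    case True
    have "f 1 \<le> f w"
    proof (rule DERIV_nonneg_imp_nondecreasing[OF True])
      fix x assume x: "1 \<le> x" "x \<le> w"
      have "x powr (c - 1) \<le> 1" using powr_mono[of "c-1" 0 x] x c by simp
      then have "c * x powr (c - 1) - c \<ge> 0" using c
        by (metis diff_ge_0_iff_ge mult_le_cancel_left mult.right_neutral not_le)
      then show "\<exists>y. DERIV f x :> y \<and> y \<ge> 0" using d[of x] x by auto
    qed
    then show ?thesis using f1 by (simp add: f_def)
  next
    case False
    then have wl: "w \<le> 1" using w by auto
    have "f w \<ge> f 1"
    proof (rule DERIV_nonpos_imp_nonincreasing[OF wl])
      fix x assume x: "w \<le> x" "x \<le> 1"
      have "x powr (c - 1) \<ge> 1" using x c w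
        by (metis diff_le_0_iff_le dual_order.trans le_numeral_extra(1) powr_mono2' powr_one_eq_one less_le_trans c)
      then have "c * x powr (c - 1) - c \<le> 0" using c
        by (metis diff_le_0_iff_le mult.right_neutral mult_left_mono_neg)
      then show "\<exists>y. DERIV f x :> y \<and> y \<le> 0" using d[of x] x w by auto
    qed
    then show ?thesis using f1 by (simp add: f_def)
  qed
qed


lemma tan_concave:
  fixes b u v :: real
  assumes b: "0 < b" "b < 1" and uv: "0 < u" "0 < v" "v \<noteq> u"
  shows "v powr b < u powr b + b * u powr (b - 1) * (v - u)"
proof -
  have "(v/u) powr b < 1 + b * (v/u - 1)" using uv b by (intro tan_concave1) auto
  then have "u powr b * (v/u) powr b < u powr b * (1 + b * (v/u - 1))"
    using uv by (intro mult_strict_left_mono) auto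
  moreover have "u powr b * (v/u) powr b = v powr b" using uv by (simp add: powr_divide)
  moreover have "u powr b * (1 + b * (v/u - 1)) = u powr b + b * u powr (b - 1) * (v - u)"
    using uv by (simp add: powr_diff field_simps)
  ultimately show ?thesis by simp
qed

lemma tan_convex:
  fixes c u v :: real
  assumes c: "c \<le> 0" and uv: "0 < u" "0 < v"
  shows "v powr c \<ge> u powr c + c * u powr (c - 1) * (v - u)"
proof -
  have "(v/u) powr c \<ge> 1 + c * (v/u - 1)" using uv c by (intro tan_convex1) auto
  then have "u powr c * (v/u) powr c \<ge> u powr c * (1 + c * (v/u - 1))"
    using uv by (intro mult_left_mono) auto
  moreover have "u powr c * (v/u) powr c = v powr c" using uv by (simp add: powr_divide)
  moreover have "u powr c * (1 + c * (v/u - 1)) = u powr c + c * u powr (c - 1) * (v - u)"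
    using uv by (simp add: powr_diff field_simps)
  ultimately show ?thesis by simp
qed

lemma h1: "(X::real) \<le> U + b*W*(x - (x+y)) \<Longrightarrow> U - (X+U)/2 - y*(b*W)/2 \<ge> 0" by (simp add: field_simps)

lemma lin_helper: "(k::real)*(A - B/2 - y*C/2) = k*A - k*B/2 - y*k*C/2" by algebra

definition phi :: "real \<Rightarrow> real \<Rightarrow> real" where
  "phi al x = ((x+1) powr (2-al) - x powr (2-al)) / (2-al) - (x powr (1-al) + (x+1) powr (1-al)) / 2"

lemma phi_nonneg:
  fixes al x :: real
  assumes al: "0 < al" "al < 1" and x: "0 < x"
  shows "phi al x \<ge> 0"
proof -
  define psi where "psi = (\<lambda>y. ((x+y) powr (2-al) - x powr (2-al)) / (2-al) - y * (x powr (1-al) + (x+y) powr (1-al)) / 2)"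
  have d: "DERIV psi y :> (x+y) powr (1-al) - (x powr (1-al) + (x+y) powr (1-al)) / 2 - y * ((1-al) * (x+y) powr (-al)) / 2"
    if "0 \<le> y" for y
    unfolding psi_def using that x al
    by (auto intro!: derivative_eq_intros) (auto simp: field_simps)
  have "psi 0 \<le> psi 1"
  proof (rule DERIV_nonneg_imp_nondecreasing[of 0 1 psi])
    fix y :: real assume y: "0 \<le> y" "y \<le> 1"
    have "x powr (1-al) \<le> (x+y) powr (1-al) + (1-al) * (x+y) powr ((1-al) - 1) * (x - (x+y))"
      using tan_concave[of "1-al" "x+y" x] al x y by (cases "y = 0") auto
    then have "(x+y) powr (1-al) - (x powr (1-al) + (x+y) powr (1-al)) / 2 - y * ((1-al) * (x+y) powr (-al)) / 2 \<ge> 0"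
      using h1 by simp
    then show "\<exists>d. DERIV psi y :> d \<and> d \<ge> 0" using d[of y] y by blast
  qed simp
  moreover have "psi 0 = 0" by (simp add: psi_def)
  moreover have "psi 1 = phi al x" by (simp add: psi_def phi_def)
  ultimately show ?thesis by simp
qed

lemma phi_decr:
  fixes al x :: real
  assumes al: "0 < al" "al < 1" and x: "0 < x"
  shows "phi al (x+1) \<le> phi al x"
proof -
  have key: "(z+1) powr (1-al) - z powr (1-al) - (1-al) * (z powr (-al) + (z+1) powr (-al)) / 2 \<le> 0"
    if z: "0 < z" for z :: real
  proof -
    define psi where "psi = (\<lambda>y. (z+y) powr (1-al) - z powr (1-al) - y * (1-al) * (z powr (-al) + (z+y) powr (-al)) / 2)"
    have d: "DERIV psi y :> (1-al) * (z+y) powr (-al) - (1-al) * (z powr (-al) + (z+y) powr (-al)) / 2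
             - y * (1-al) * ((-al) * (z+y) powr (-al-1)) / 2"
      if "0 \<le> y" for y
      unfolding psi_def using that z al
      by (auto intro!: derivative_eq_intros) (auto simp: field_simps)
    have "psi 0 \<ge> psi 1"
    proof (rule DERIV_nonpos_imp_nonincreasing[of 0 1 psi])
      fix y :: real assume y: "0 \<le> y" "y \<le> 1"
      have "z powr (-al) \<ge> (z+y) powr (-al) + (-al) * (z+y) powr (-al - 1) * (z - (z+y))"
        using tan_convex[of "-al" "z+y" z] al z y by auto
      then have "(z+y) powr (-al) - (z powr (-al) + (z+y) powr (-al)) / 2
             - y * ((-al) * (z+y) powr (-al-1)) / 2 \<le> 0"
        by (simp add: algebra_simps)
      then have "(1-al) * ((z+y) powr (-al) - (z powr (-al) + (z+y) powr (-al)) / 2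
             - y * ((-al) * (z+y) powr (-al-1)) / 2) \<le> 0"
        using al by (simp add: mult_nonneg_nonpos)
      then have "(1-al) * (z+y) powr (-al) - (1-al) * (z powr (-al) + (z+y) powr (-al)) / 2
             - y * (1-al) * ((-al) * (z+y) powr (-al-1)) / 2 \<le> 0"
        using lin_helper[of "1-al" "(z+y) powr (-al)" "z powr (-al) + (z+y) powr (-al)" y "(-al) * (z+y) powr (-al-1)"]
        by argo
      then show "\<exists>d. DERIV psi y :> d \<and> d \<le> 0" using d[of y] y by blast
    qed simp
    moreover have "psi 0 = 0" by (simp add: psi_def)
    ultimately show ?thesis by (simp add: psi_def algebra_simps)
  qed
  have dphi: "DERIV (phi al) z :> (z+1) powr (1-al) - z powr (1-al) - (1-al) * (z powr (-al) + (z+1) powr (-al)) / 2"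
    if "0 < z" for z
    unfolding phi_def[abs_def] using that al
    by (auto intro!: derivative_eq_intros) (auto simp: field_simps)
  show ?thesis
  proof (rule DERIV_nonpos_imp_nonincreasing[of x "x+1" "phi al"])
    fix z :: real assume "x \<le> z" "z \<le> x + 1"
    then have "0 < z" using x by auto
    then show "\<exists>d. DERIV (phi al) z :> d \<and> d \<le> 0" using dphi key by blast
  qed simp
qed


definition bf :: "real \<Rightarrow> real \<Rightarrow> real \<Rightarrow> real \<Rightarrow> real \<Rightarrow> real" where
  "bf al D L A B = (1 / D) * ((2 / (2 - al)) * (A powr (2 - al) - B powr (2 - al)) - L * (B powr (1 - al) + A powr (1 - al)))"

definition Cn :: "real \<Rightarrow> real \<Rightarrow> real \<Rightarrow> real" where
  "Cn al q r = bf al (1+q) q (r+q) r + r powr (1-al)"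
definition C1 :: "real \<Rightarrow> real \<Rightarrow> real \<Rightarrow> real" where
  "C1 al q r = ((r+q) powr (1-al) - r powr (1-al) - bf al (1+q) q (r+q) r) / q"
definition C2 :: "real \<Rightarrow> real \<Rightarrow> real \<Rightarrow> real \<Rightarrow> real" where
  "C2 al p q r = ((r+q) powr (1-al) - r powr (1-al) + bf al (q+p) p (r+q+p) (r+q) - bf al (1+q) q (r+q) r) / q"
definition G1 :: "real \<Rightarrow> real \<Rightarrow> real \<Rightarrow> real" where
  "G1 al q r = (2*(1-al/2)-1) * Cn al q r - (1-al/2) * C1 al q r"
definition G2 :: "real \<Rightarrow> real \<Rightarrow> real \<Rightarrow> real \<Rightarrow> real" where
  "G2 al p q r = (2*(1-al/2)-1) * Cn al q r - (1-al/2) * C2 al p q r"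

lemma bf_phi: "0 < al \<Longrightarrow> al < 1 \<Longrightarrow> bf al 2 1 (s+1) s = phi al s"
  by (simp add: bf_def phi_def field_simps)

lemma strict_part:
  fixes al :: real
  assumes al: "0 < al" "al < 1"
  defines "s \<equiv> 1 - al/2"
  shows "s * ((s+1) powr (1-al) - s powr (1-al)) < (1-al) * s powr (1-al)"
proof -
  have s: "0 < s" using al by (simp add: s_def)
  have "(s+1) powr (1-al) < s powr (1-al) + (1-al) * s powr ((1-al) - 1) * ((s+1) - s)"
    using tan_concave[of "1-al" s "s+1"] al s by auto
  then have "s * ((s+1) powr (1-al) - s powr (1-al)) < s * ((1-al) * s powr ((1-al) - 1))"
    using s by (intro mult_strict_left_mono) auto
  also have "s * ((1-al) * s powr ((1-al) - 1)) = (1-al) * (s * s powr ((1-al) - 1))" by simp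
  also have "s * s powr ((1-al) - 1) = s powr (1-al)"
  proof -
    have "s powr (1-al) = s powr (1 + ((1-al)-1))" by simp
    also have "\<dots> = s powr 1 * s powr ((1-al)-1)" by (rule powr_add)
    finally show ?thesis using s by simp
  qed
  finally show ?thesis .
qed

lemma G_limit:
  fixes al :: real
  assumes al: "0 < al" "al < 1"
  defines "s \<equiv> 1 - al/2"
  shows "G1 al 1 s > 0" "G2 al 1 1 s > 0"
proof -
  have s: "0 < s" using al by (simp add: s_def)
  have e1: "bf al (1+1) 1 (s+1) s = phi al s" using bf_phi[OF al, of s] by simp
  have e2: "bf al (1+1) 1 (s+1+1) (s+1) = phi al (s+1)" using bf_phi[OF al, of "s+1"] by simp
  have st: "s * ((s+1) powr (1-al) - s powr (1-al)) < (1-al) * s powr (1-al)"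
    using strict_part[OF al] by (simp add: s_def)
  have p0: "phi al s \<ge> 0" using phi_nonneg[OF al s] .
  have pd: "phi al (s+1) \<le> phi al s" using phi_decr[OF al s] .
  have c: "2*(1-al/2)-1 = 1 - al" by simp
  have "G1 al 1 s = (1-al) * (phi al s + s powr (1-al)) - s * ((s+1) powr (1-al) - s powr (1-al) - phi al s)"
    unfolding G1_def Cn_def C1_def e1 c by (simp add: s_def)
  moreover have "(1-al) * phi al s \<ge> 0" using p0 al by simp
  moreover have "s * phi al s \<ge> 0" using p0 s by simp
  ultimately show "G1 al 1 s > 0" using st by (simp add: algebra_simps)
  have "G2 al 1 1 s = (1-al) * (phi al s + s powr (1-al)) - s * ((s+1) powr (1-al) - s powr (1-al) + phi al (s+1) - phi al s)"
    unfolding G2_def Cn_def C2_def e1 e2 c by (simp add: s_def)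
  moreover have "(1-al) * phi al s \<ge> 0" using p0 al by simp
  moreover have "s * (phi al s - phi al (s+1)) \<ge> 0" using pd s by simp
  ultimately show "G2 al 1 1 s > 0" using st by (simp add: algebra_simps)
qed


lemma dist3: "dist (p::real, q::real, r::real) (a, b, c) \<le> \<bar>p-a\<bar> + \<bar>q-b\<bar> + \<bar>r-c\<bar>"
proof -
  have "dist (q, r) (b, c) \<le> \<bar>q-b\<bar> + \<bar>r-c\<bar>"
    using sqrt_sum_squares_le_sum_abs[of "q-b" "r-c"] by (simp add: dist_Pair_Pair dist_real_def)
  moreover have "dist (p, q, r) (a, b, c) \<le> \<bar>p-a\<bar> + dist (q, r) (b, c)"
    using sqrt_sum_squares_le_sum_abs[of "p-a" "dist (q, r) (b, c)"] by (simp add: dist_Pair_Pair dist_real_def)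
  ultimately show ?thesis by simp
qed

lemma G2_near:
  fixes al :: real
  assumes al: "0 < al" "al < 1"
  shows "\<exists>d>0. \<forall>p q r. \<bar>p-1\<bar> < d \<and> \<bar>q-1\<bar> < d \<and> \<bar>r-(1-al/2)\<bar> < d \<longrightarrow> G2 al p q r > 0"
proof -
  define s where "s = 1 - al/2"
  have s: "0 < s" using al by (simp add: s_def)
  define f where "f = (\<lambda>v::real\<times>real\<times>real. G2 al (fst v) (fst (snd v)) (snd (snd v)))"
  have "isCont f (1,1,s)"
    unfolding f_def G2_def Cn_def C2_def bf_def using al s
    by (intro continuous_intros) (auto simp: netlimit_at)
  moreover have pos: "f (1,1,s) > 0" using G_limit(2)[OF al] by (simp add: f_def s_def)
  ultimately obtain d where d: "d > 0" "\<And>x'. dist x' (1,1,s) < d \<Longrightarrow> dist (f x') (f (1,1,s)) < f (1,1,s)"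
    unfolding continuous_at_eps_delta by blast
  show ?thesis
  proof (intro exI[of _ "d/3"] conjI allI impI)
    show "d/3 > 0" using d by simp
    fix p q r assume h: "\<bar>p-1\<bar> < d/3 \<and> \<bar>q-1\<bar> < d/3 \<and> \<bar>r-(1-al/2)\<bar> < d/3"
    have "dist (p,q,r) (1,1,s) < d" using dist3[of p q r 1 1 s] h by (simp add: s_def)
    then have "dist (f (p,q,r)) (f (1,1,s)) < f (1,1,s)" by (rule d(2))
    then have "f (p,q,r) > 0" by (simp add: dist_real_def)
    then show "G2 al p q r > 0" by (simp add: f_def)
  qed
qed

lemma G1_near:
  fixes al :: real
  assumes al: "0 < al" "al < 1"
  shows "\<exists>d>0. \<forall>q r. \<bar>q-1\<bar> < d \<and> \<bar>r-(1-al/2)\<bar> < d \<longrightarrow> G1 al q r > 0"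
proof -
  define s where "s = 1 - al/2"
  have s: "0 < s" using al by (simp add: s_def)
  define f where "f = (\<lambda>v::real\<times>real. G1 al (fst v) (snd v))"
  have "isCont f (1,s)"
    unfolding f_def G1_def Cn_def C1_def bf_def using al s
    by (intro continuous_intros) (auto simp: netlimit_at)
  moreover have pos: "f (1,s) > 0" using G_limit(1)[OF al] by (simp add: f_def s_def)
  ultimately obtain d where d: "d > 0" "\<And>x'. dist x' (1,s) < d \<Longrightarrow> dist (f x') (f (1,s)) < f (1,s)"
    unfolding continuous_at_eps_delta by blast
  show ?thesis
  proof (intro exI[of _ "d/2"] conjI allI impI)
    show "d/2 > 0" using d by simp
    fix q r assume h: "\<bar>q-1\<bar> < d/2 \<and> \<bar>r-(1-al/2)\<bar> < d/2"
    have "dist (q,r) (1,s) \<le> \<bar>q-1\<bar> + \<bar>r-s\<bar>"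
      using sqrt_sum_squares_le_sum_abs[of "q-1" "r-s"] by (simp add: dist_Pair_Pair dist_real_def)
    then have "dist (q,r) (1,s) < d" using h by (simp add: s_def)
    then have "dist (f (q,r)) (f (1,s)) < f (1,s)" by (rule d(2))
    then have "f (q,r) > 0" by (simp add: dist_real_def)
    then show "G1 al q r > 0" by (simp add: f_def)
  qed
qed


lemma bf_scale:
  assumes H: "H > 0"
  shows "bf al (H*D) (H*L) (H*A) (H*B) = H powr (1-al) * bf al D L A B"
proof -
  have e: "H powr (2-al) = H * H powr (1-al)"
  proof -
    have "H powr (2-al) = H powr (1 + (1-al))" by simp
    also have "\<dots> = H powr 1 * H powr (1-al)" by (rule powr_add)
    finally show ?thesis using H by simp
  qed
  show ?thesis
    unfolding bf_def powr_mult e using H by (cases "D = 0"; cases "al = 2") (simp_all add: field_simps)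
qed

lemma Cn_scale:
  assumes H: "H > 0"
  shows "(bf al (H+H*q) (H*q) (H*r+H*q) (H*r) + (H*r) powr (1-al)) / (g*H) = (H powr (1-al) / (g*H)) * Cn al q r"
proof -
  have "bf al (H+H*q) (H*q) (H*r+H*q) (H*r) = bf al (H*(1+q)) (H*q) (H*(r+q)) (H*r)"
    by (simp add: algebra_simps)
  also have "\<dots> = H powr (1-al) * bf al (1+q) q (r+q) r" by (rule bf_scale[OF H])
  finally show ?thesis unfolding Cn_def powr_mult by (simp add: field_simps)
qed

lemma C1_scale:
  assumes H: "H > 0" and q: "q > 0"
  shows "((H*r+H*q) powr (1-al) - (H*r) powr (1-al) - bf al (H+H*q) (H*q) (H*r+H*q) (H*r)) / (g*(H*q))
     = (H powr (1-al) / (g*H)) * C1 al q r"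
proof -
  have "bf al (H+H*q) (H*q) (H*r+H*q) (H*r) = bf al (H*(1+q)) (H*q) (H*(r+q)) (H*r)"
    by (simp add: algebra_simps)
  also have "\<dots> = H powr (1-al) * bf al (1+q) q (r+q) r" by (rule bf_scale[OF H])
  finally have e: "bf al (H+H*q) (H*q) (H*r+H*q) (H*r) = H powr (1-al) * bf al (1+q) q (r+q) r" .
  have e2: "(H*r+H*q) powr (1-al) = H powr (1-al) * (r+q) powr (1-al)"
    by (simp add: powr_mult[symmetric] algebra_simps)
  show ?thesis unfolding C1_def e e2 powr_mult using H q by (simp add: field_simps)
qed

lemma C2_scale:
  assumes H: "H > 0" and q: "q > 0"
  shows "((H*r+H*q) powr (1-al) - (H*r) powr (1-al)
          + bf al (H*q+H*p) (H*p) (H*r+H*q+H*p) (H*r+H*q)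
          - bf al (H+H*q) (H*q) (H*r+H*q) (H*r)) / (g*(H*q))
     = (H powr (1-al) / (g*H)) * C2 al p q r"
proof -
  have "bf al (H+H*q) (H*q) (H*r+H*q) (H*r) = bf al (H*(1+q)) (H*q) (H*(r+q)) (H*r)"
    by (simp add: algebra_simps)
  also have "\<dots> = H powr (1-al) * bf al (1+q) q (r+q) r" by (rule bf_scale[OF H])
  finally have e: "bf al (H+H*q) (H*q) (H*r+H*q) (H*r) = H powr (1-al) * bf al (1+q) q (r+q) r" .
  have "bf al (H*q+H*p) (H*p) (H*r+H*q+H*p) (H*r+H*q) = bf al (H*(q+p)) (H*p) (H*(r+q+p)) (H*(r+q))"
    by (simp add: algebra_simps)
  also have "\<dots> = H powr (1-al) * bf al (q+p) p (r+q+p) (r+q)" by (rule bf_scale[OF H])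
  finally have e3: "bf al (H*q+H*p) (H*p) (H*r+H*q+H*p) (H*r+H*q) = H powr (1-al) * bf al (q+p) p (r+q+p) (r+q)" .
  have e2: "(H*r+H*q) powr (1-al) = H powr (1-al) * (r+q) powr (1-al)"
    by (simp add: powr_mult[symmetric] algebra_simps)
  show ?thesis unfolding C2_def e e2 e3 powr_mult using H q by (simp add: field_simps)
qed


lemma ln_upper: "0 < (x::real) \<Longrightarrow> x \<le> y \<Longrightarrow> ln (y/x) \<le> (y-x)/x"
  using ln_le_minus_one[of "y/x"] by (simp add: diff_divide_distrib)

lemma ln_lower: "0 < (x::real) \<Longrightarrow> x \<le> y \<Longrightarrow> (y-x)/y \<le> ln (y/x)"
proof -
  assume h: "0 < x" "x \<le> y"
  have "ln (x/y) \<le> x/y - 1" using h by (intro ln_le_minus_one) auto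
  moreover have "ln (x/y) = - ln (y/x)" using h by (simp add: ln_div)
  moreover have "x/y - 1 = - ((y-x)/y)" using h by (simp add: field_simps)
  ultimately show ?thesis by linarith
qed

lemma mesh_qr:
  fixes x tau a sg d :: real
  assumes a: "0 < a" "a \<le> x" and tau: "0 < tau" and sg: "0 < sg" "sg \<le> 1"
  defines "H \<equiv> ln ((x+2*tau)/(x+tau))" and "Q \<equiv> ln ((x+tau)/x)" and "R \<equiv> ln ((x+tau+sg*tau)/(x+tau))"
  shows "H > 0" "Q > 0" "R > 0" "\<bar>Q/H - 1\<bar> \<le> 2*tau/a" "\<bar>R/H - sg\<bar> \<le> tau/a"
proof -
  have x: "0 < x" using a by simp
  have Hl: "H \<ge> tau/(x+2*tau)" using ln_lower[of "x+tau" "x+2*tau"] x tau by (simp add: H_def)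
  have Hu: "H \<le> tau/(x+tau)" using ln_upper[of "x+tau" "x+2*tau"] x tau by (simp add: H_def)
  have Ql: "Q \<ge> tau/(x+tau)" using ln_lower[of "x" "x+tau"] x tau by (simp add: Q_def)
  have Qu: "Q \<le> tau/x" using ln_upper[of "x" "x+tau"] x tau by (simp add: Q_def)
  have Rl: "R \<ge> sg*tau/(x+tau+sg*tau)" using ln_lower[of "x+tau" "x+tau+sg*tau"] x tau sg by (simp add: R_def)
  have Ru: "R \<le> sg*tau/(x+tau)" using ln_upper[of "x+tau" "x+tau+sg*tau"] x tau sg by (simp add: R_def)
  have Hp: "H > 0" using Hl x tau by (smt (verit) divide_pos_pos)
  then show "H > 0" .
  show "Q > 0" using Ql x tau by (smt (verit) divide_pos_pos)
  show "R > 0" using Rl x tau sg by (smt (verit) divide_pos_pos mult_pos_pos)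
  have QH: "H \<le> Q" using Hu Ql by simp
  have nz: "x + 2*tau \<noteq> 0" "x \<noteq> 0" "x + tau \<noteq> 0" using x tau by auto
  have "tau/x = (tau/(x+2*tau)) * (1 + 2*tau/x)" using nz by (simp add: divide_simps; simp add: algebra_simps)
  also have "\<dots> \<le> H * (1 + 2*tau/a)"
    using Hl Hp x tau a by (intro mult_mono) (auto intro!: divide_left_mono)
  finally have "Q \<le> H * (1 + 2*tau/a)" using Qu by simp
  then have "Q/H \<le> 1 + 2*tau/a" using Hp by (simp add: pos_divide_le_eq mult.commute)
  moreover have "Q/H \<ge> 1" using QH Hp by simp
  ultimately show "\<bar>Q/H - 1\<bar> \<le> 2*tau/a" by simp
  have "sg*tau/(x+tau) = sg * (tau/(x+2*tau)) + sg * (tau/(x+2*tau)) * (tau/(x+tau))"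
    using nz by (simp add: divide_simps; simp add: algebra_simps)
  also have "\<dots> \<le> sg * H + H * (tau/a)"
  proof -
    have "sg * (tau/(x+2*tau)) \<le> sg * H" using mult_left_mono[OF Hl, of sg] sg by (simp del: times_divide_eq_right)
    moreover have "sg * (tau/(x+2*tau)) * (tau/(x+tau)) \<le> 1 * H * (tau/a)"
      using Hl Hp sg x tau a by (intro mult_mono) (auto intro!: divide_left_mono)
    ultimately show ?thesis by simp
  qed
  finally have "R \<le> H * (sg + tau/a)" using Ru by (simp add: algebra_simps)
  then have r1: "R/H \<le> sg + tau/a" using Hp by (simp add: pos_divide_le_eq mult.commute)
  have "H * (sg - tau/a) = sg * H - H * (tau/a)" by (simp add: algebra_simps)
  also have "\<dots> \<le> sg * (tau/(x+tau)) - (tau/(x+2*tau)) * (tau/(x+tau))"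
  proof -
    have "sg * H \<le> sg * (tau/(x+tau))" using mult_left_mono[OF Hu, of sg] sg by (simp del: times_divide_eq_right)
    moreover have "(tau/(x+2*tau)) * (tau/(x+tau)) \<le> H * (tau/a)"
      using Hl Hp x tau a by (intro mult_mono) (auto intro!: divide_left_mono)
    ultimately show ?thesis by simp
  qed
  also have "\<dots> \<le> sg * (tau/(x+tau)) - sg * (tau/(x+2*tau)) * (tau/(x+tau))"
  proof -
    have "sg * ((tau/(x+2*tau)) * (tau/(x+tau))) \<le> 1 * ((tau/(x+2*tau)) * (tau/(x+tau)))"
      using sg x tau by (intro mult_right_mono) auto
    then show ?thesis by simp
  qed
  also have "\<dots> = sg*tau/(x+2*tau)" using nz by (simp add: divide_simps; simp add: algebra_simps)
  also have "\<dots> \<le> sg*tau/(x+tau+sg*tau)"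
  proof (rule divide_left_mono)
    have "sg * tau \<le> tau" using sg tau by (simp add: mult_left_le_one_le)
    then show "x + tau + sg * tau \<le> x + 2 * tau" by simp
    show "0 \<le> sg * tau" using sg tau by simp
    have "0 < x + tau + sg * tau" using x tau sg by (simp add: add_pos_nonneg)
    then show "0 < (x + 2 * tau) * (x + tau + sg * tau)" using x tau by simp
  qed
  finally have "H * (sg - tau/a) \<le> R" using Rl by simp
  then have r2: "sg - tau/a \<le> R/H" using Hp by (simp add: pos_le_divide_eq mult.commute)
  show "\<bar>R/H - sg\<bar> \<le> tau/a" using r1 r2 by simp
qed

lemma mesh_p:
  fixes x tau a :: real
  assumes a: "0 < a" "a \<le> x - tau" and tau: "0 < tau"
  defines "H \<equiv> ln ((x+2*tau)/(x+tau))" and "P \<equiv> ln (x/(x-tau))"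
  shows "P > 0" "\<bar>P/H - 1\<bar> \<le> 3*tau/a"
proof -
  have x: "0 < x - tau" using a by simp
  have Hl: "H \<ge> tau/(x+2*tau)" using ln_lower[of "x+tau" "x+2*tau"] x tau by (simp add: H_def)
  have Hu: "H \<le> tau/(x+tau)" using ln_upper[of "x+tau" "x+2*tau"] x tau by (simp add: H_def)
  have Pl: "P \<ge> tau/x" using ln_lower[of "x-tau" "x"] x tau by (simp add: P_def)
  have Pu: "P \<le> tau/(x-tau)" using ln_upper[of "x-tau" "x"] x tau by (simp add: P_def)
  have Hp: "H > 0" using Hl x tau by (smt (verit) divide_pos_pos)
  show "P > 0" using Pl x tau by (smt (verit) divide_pos_pos)
  have "tau/(x+tau) \<le> tau/x" using x tau by (intro divide_left_mono) auto
  then have PH: "H \<le> P" using Hu Pl by simp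
  have nz: "x + 2*tau \<noteq> 0" "x - tau \<noteq> 0" using x tau by auto
  have "tau/(x-tau) = (tau/(x+2*tau)) * (1 + 3*tau/(x-tau))" using nz by (simp add: divide_simps; simp add: algebra_simps)
  also have "\<dots> \<le> H * (1 + 3*tau/a)"
    using Hl Hp x tau a by (intro mult_mono) (auto intro!: divide_left_mono)
  finally have "P \<le> H * (1 + 3*tau/a)" using Pu by simp
  then have "P/H \<le> 1 + 3*tau/a" using Hp by (simp add: pos_divide_le_eq mult.commute)
  moreover have "P/H \<ge> 1" using PH Hp by simp
  ultimately show "\<bar>P/H - 1\<bar> \<le> 3*tau/a" by simp
qed


lemma ln3: "0 < (u::real) \<Longrightarrow> 0 < v \<Longrightarrow> 0 < w \<Longrightarrow> ln (u/w) = ln (u/v) + ln (v/w)"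
  by (simp add: ln_div)

theorem lemma2p2:
  fixes al a T :: real
  assumes "0 < al" and "al < 1" and "0 < a" and "a < T"
  shows "\<exists>tau0 > 0. \<forall>N::nat. 0 < N \<longrightarrow> (T - a) / real N \<le> tau0 \<longrightarrow>
           (\<forall>k::nat. 1 \<le> k \<and> k + 1 \<le> N \<longrightarrow>
              (2 * (1 - al / 2) - 1) * ccoef al (1 - al / 2) a ((T - a) / real N) (k + 1) k
                > (1 - al / 2) * ccoef al (1 - al / 2) a ((T - a) / real N) k k)"
proof -
  have al: "0 < al" "al < 1" using assms by auto
  have a: "0 < a" using assms by auto
  define s where "s = 1 - al/2"
  have s: "0 < s" "s \<le> 1" using al by (auto simp: s_def)
  obtain d1 where d1: "d1 > 0" "\<And>q r. \<bar>q-1\<bar> < d1 \<Longrightarrow> \<bar>r-s\<bar> < d1 \<Longrightarrow> G1 al q r > 0"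
    using G1_near[OF al] unfolding s_def by blast
  obtain d2 where d2: "d2 > 0" "\<And>p q r. \<bar>p-1\<bar> < d2 \<Longrightarrow> \<bar>q-1\<bar> < d2 \<Longrightarrow> \<bar>r-s\<bar> < d2 \<Longrightarrow> G2 al p q r > 0"
    using G2_near[OF al] unfolding s_def by blast
  define d where "d = min d1 d2"
  have d: "d > 0" "d \<le> d1" "d \<le> d2" using d1 d2 by (auto simp: d_def)
  have main: "(2 * s - 1) * ccoef al s a tau (k + 1) k > s * ccoef al s a tau k k"
    if tau: "0 < tau" "tau \<le> a*d/4" and k: "1 \<le> k" for tau :: real and k :: nat
  proof -
    have sm: "tau/a \<le> d/4" using tau a by (simp add: divide_le_eq mult.commute)
    define x where "x = tg a tau (real k - 1)"
    have x: "a \<le> x" using k tau a by (simp add: x_def tg_def)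
    have xp: "0 < x" using x a by simp
    have t1: "tg a tau (real k) = x + tau" by (simp add: x_def tg_def algebra_simps)
    have t2: "tg a tau (real k + 1) = x + 2*tau" by (simp add: x_def tg_def algebra_simps)
    have t3: "tg a tau (real k + s) = x + tau + s*tau" by (simp add: x_def tg_def algebra_simps)
    define H where "H = ln ((x+2*tau)/(x+tau))"
    define Q where "Q = ln ((x+tau)/x)"
    define R where "R = ln ((x+tau+s*tau)/(x+tau))"
    have m: "H > 0" "Q > 0" "R > 0" "\<bar>Q/H - 1\<bar> \<le> 2*tau/a" "\<bar>R/H - s\<bar> \<le> tau/a"
      using mesh_qr[OF a x tau(1) s] unfolding H_def Q_def R_def by auto
    have pos: "0 < x + tau" "0 < x + 2*tau" "0 < x + tau + s*tau" using xp tau s by (auto intro!: add_pos_pos mult_pos_pos)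
    have lHQ: "ln ((x+2*tau)/x) = H + Q" unfolding H_def Q_def using ln3 pos xp by blast
    have lRQ: "ln ((x+tau+s*tau)/x) = R + Q" unfolding R_def Q_def using ln3 pos xp by blast
    define K where "K = H powr (1-al) / (Gamma (2-al) * H)"
    have K: "K > 0" using m al by (simp add: K_def)
    have g: "Gamma (2-al) > 0" using al by simp
    define q where "q = Q/H"
    define r where "r = R/H"
    have Qq: "Q = H*q" and Rr: "R = H*r" using m by (simp_all add: q_def r_def)
    have qp: "q > 0" using m by (simp add: q_def)
    have ak: "acoef al s a tau k k = (R+Q) powr (1-al) - R powr (1-al)"
      unfolding acoef_def using t1 t3 lRQ by (simp add: x_def[symmetric] R_def)
    have bk: "bcoef al s a tau k k = bf al (H+Q) Q (R+Q) R"
      unfolding bcoef_def bf_def using t1 t2 t3 lRQ lHQ by (simp add: x_def[symmetric] R_def Q_def)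
    have cn: "ccoef al s a tau (k+1) k = K * Cn al q r"
    proof -
      have "ccoef al s a tau (k+1) k = (bcoef al s a tau k k + (ln (tg a tau (real k + s) / tg a tau (real k))) powr (1 - al))
         / (Gamma (2 - al) * ln (tg a tau (real k + 1) / tg a tau (real k)))"
        using k by (simp add: ccoef_def)
      also have "\<dots> = (bf al (H+H*q) (H*q) (H*r+H*q) (H*r) + (H*r) powr (1-al)) / (Gamma (2-al) * H)"
        unfolding bk t1 t2 t3 using Qq Rr by (simp add: R_def[symmetric] H_def[symmetric])
      also have "\<dots> = K * Cn al q r" unfolding K_def by (rule Cn_scale[OF m(1)])
      finally show ?thesis .
    qed
    show ?thesis
    proof (cases "k = 1")
      case True
      have "ccoef al s a tau k k = (acoef al s a tau k k - bcoef al s a tau k k)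
          / (Gamma (2 - al) * ln (tg a tau (real k) / tg a tau (real k - 1)))"
        using True by (simp add: ccoef_def)
      also have "\<dots> = ((H*r+H*q) powr (1-al) - (H*r) powr (1-al) - bf al (H+H*q) (H*q) (H*r+H*q) (H*r)) / (Gamma (2-al) * (H*q))"
        unfolding ak bk t1 x_def[symmetric] Q_def[symmetric] Qq Rr by simp
      also have "\<dots> = K * C1 al q r" unfolding K_def by (rule C1_scale[OF m(1) qp])
      finally have c1: "ccoef al s a tau k k = K * C1 al q r" .
      have "G1 al q r > 0" using d1(2)[of q r] m(4,5) sm d unfolding q_def r_def by linarith
      then have "K * G1 al q r > 0" using K by simp
      then have "(2 * s - 1) * (K * Cn al q r) > s * (K * C1 al q r)" unfolding G1_def s_def by (simp add: algebra_simps)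
      then show ?thesis unfolding cn c1 .
    next
      case False
      then have k2: "2 \<le> k" using k by simp
      have x2: "a \<le> x - tau" using k2 tau a by (simp add: x_def tg_def algebra_simps)
      define P where "P = ln (x/(x-tau))"
      have mp: "P > 0" "\<bar>P/H - 1\<bar> \<le> 3*tau/a"
        using mesh_p[OF a x2 tau(1)] unfolding H_def P_def by auto
      define p where "p = P/H"
      have Pp: "P = H*p" using m by (simp add: p_def)
      have xm: "0 < x - tau" using x2 a by simp
      have t0: "tg a tau (real (k-1) - 1) = x - tau" "tg a tau (real (k-1)) = x" "tg a tau (real (k-1) + 1) = x + tau"
        using k2 by (simp_all add: x_def tg_def of_nat_diff algebra_simps)
      have lQP: "ln ((x+tau)/(x-tau)) = Q + P" unfolding Q_def P_def using ln3 pos xp xm by blast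
      have lRQP: "ln ((x+tau+s*tau)/(x-tau)) = R + Q + P"
        using ln3[of "x+tau+s*tau" x "x-tau"] lRQ pos xp xm by (simp add: P_def)
      have bk1: "bcoef al s a tau (k-1) k = bf al (Q+P) P (R+Q+P) (R+Q)"
        unfolding bcoef_def bf_def t0 t3 using lRQ lQP lRQP by (simp add: P_def)
      have "ccoef al s a tau k k = (acoef al s a tau k k + bcoef al s a tau (k-1) k - bcoef al s a tau k k)
          / (Gamma (2 - al) * ln (tg a tau (real k) / tg a tau (real k - 1)))"
        using k2 by (simp add: ccoef_def)
      also have "\<dots> = ((H*r+H*q) powr (1-al) - (H*r) powr (1-al)
          + bf al (H*q+H*p) (H*p) (H*r+H*q+H*p) (H*r+H*q)
          - bf al (H+H*q) (H*q) (H*r+H*q) (H*r)) / (Gamma (2-al) * (H*q))"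
        unfolding ak bk bk1 t1 x_def[symmetric] Q_def[symmetric] Qq Rr Pp by simp
      also have "\<dots> = K * C2 al p q r" unfolding K_def by (rule C2_scale[OF m(1) qp])
      finally have c2: "ccoef al s a tau k k = K * C2 al p q r" .
      have "G2 al p q r > 0" using d2(2)[of p q r] m(4,5) mp(2) sm d unfolding p_def q_def r_def by linarith
      then have "K * G2 al p q r > 0" using K by simp
      then have "(2 * s - 1) * (K * Cn al q r) > s * (K * C2 al p q r)" unfolding G2_def s_def by (simp add: algebra_simps)
      then show ?thesis unfolding cn c2 .
    qed
  qed
  show ?thesis
  proof (intro exI[of _ "a*d/4"] conjI allI impI)
    show "a*d/4 > 0" using a d by simp
    fix N k :: nat
    assume N: "0 < N" and tN: "(T - a) / real N \<le> a*d/4" and k: "1 \<le> k \<and> k + 1 \<le> N"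
    have "0 < (T - a) / real N" using N assms by simp
    from main[OF this tN] k show "(2 * (1 - al / 2) - 1) * ccoef al (1 - al / 2) a ((T - a) / real N) (k + 1) k
                > (1 - al / 2) * ccoef al (1 - al / 2) a ((T - a) / real N) k k"
      unfolding s_def by blast
  qed
qed

end
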